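(* Let $X$ and $Y$ be bipartite graphs without isolated vertices. If $B_0(X)$ and $B_0(Y)$ are isomorphic as posets, then $X$ and $Y$ are isomorphic as graphs.
   Context: A graph $X$ is a set $V(X)$ with a symmetric subset $E(X)\subset V(X)\times V(X)$; $N(v)=\{w:(v,w)\in E(X)\}$, and $v$ is isolated if $N(v)=\emptyset$. $X$ is bipartite if there is a graph homomorphism to $K_2$ (vertices $\{1,2\}$, edges $(1,2),(2,1)$); in particular it has no loops. $B_0(X)$ is the poset whose elements are the unordered pairs $\{\sigma,\tau\}$ of non-empty (possibly infinite) subsets of $V(X)$ with $\sigma\times\tau\subset E(X)$, with $\alpha\le\beta$ iff for each $\sigma\in\alpha$ there is $\tau\in\beta$ with $\sigma\subset\tau$. *)

theory Defs
  imports Main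
begin

definition is_graph :: "'a set \<Rightarrow> ('a \<times> 'a) set \<Rightarrow> bool" where
  "is_graph V E \<longleftrightarrow> E \<subseteq> V \<times> V \<and> sym E"

definition no_isolated :: "'a set \<Rightarrow> ('a \<times> 'a) set \<Rightarrow> bool" where
  "no_isolated V E \<longleftrightarrow> (\<forall>v\<in>V. \<exists>w. (v, w) \<in> E)"

definition K2_edges :: "(nat \<times> nat) set" where
  "K2_edges = {(1, 2), (2, 1)}"

definition graph_hom :: "'a set \<Rightarrow> ('a \<times> 'a) set \<Rightarrow> 'b set \<Rightarrow> ('b \<times> 'b) set \<Rightarrow> ('a \<Rightarrow> 'b) \<Rightarrow> bool" where
  "graph_hom V E W F f \<longleftrightarrow> (\<forall>v\<in>V. f v \<in> W) \<and> (\<forall>(v, w)\<in>E. (f v, f w) \<in> F)"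

definition bipartite :: "'a set \<Rightarrow> ('a \<times> 'a) set \<Rightarrow> bool" where
  "bipartite V E \<longleftrightarrow> (\<exists>f. graph_hom V E {1, 2} K2_edges f)"

definition graph_iso :: "'a set \<Rightarrow> ('a \<times> 'a) set \<Rightarrow> 'b set \<Rightarrow> ('b \<times> 'b) set \<Rightarrow> bool" where
  "graph_iso V E W F \<longleftrightarrow> (\<exists>f. bij_betw f V W \<and> (\<forall>v\<in>V. \<forall>w\<in>V. (v, w) \<in> E \<longleftrightarrow> (f v, f w) \<in> F))"

definition B0 :: "'a set \<Rightarrow> ('a \<times> 'a) set \<Rightarrow> 'a set set set" where
  "B0 V E = {{\<sigma>, \<tau>} | \<sigma> \<tau>. \<sigma> \<noteq> {} \<and> \<tau> \<noteq> {} \<and> \<sigma> \<subseteq> V \<and> \<tau> \<subseteq> V \<and> \<sigma> \<times> \<tau> \<subseteq> E}"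

definition B0_le :: "'a set set \<Rightarrow> 'a set set \<Rightarrow> bool" where
  "B0_le \<alpha> \<beta> \<longleftrightarrow> (\<forall>\<sigma>\<in>\<alpha>. \<exists>\<tau>\<in>\<beta>. \<sigma> \<subseteq> \<tau>)"

definition poset_iso :: "'p set \<Rightarrow> ('p \<Rightarrow> 'p \<Rightarrow> bool) \<Rightarrow> 'q set \<Rightarrow> ('q \<Rightarrow> 'q \<Rightarrow> bool) \<Rightarrow> bool" where
  "poset_iso P le Q le' \<longleftrightarrow> (\<exists>f. bij_betw f P Q \<and> (\<forall>x\<in>P. \<forall>y\<in>P. le x y \<longleftrightarrow> le' (f x) (f y)))"

end

theory Submission
  imports Defs
begin


definition "atm P le x \<longleftrightarrow> x\<in>P \<and> (\<forall>y\<in>P. le y x \<longrightarrow> y = x)"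
definition "shr P le x y \<longleftrightarrow> atm P le x \<and> atm P le y \<and> x \<noteq> y \<and>
   (\<exists>b\<in>P. le x b \<and> le y b \<and> (\<forall>z\<in>P. atm P le z \<longrightarrow> le z b \<longrightarrow> z = x \<or> z = y))"
definition "str P le a \<longleftrightarrow> a\<in>P \<and> (\<forall>x\<in>P. \<forall>y\<in>P. atm P le x \<longrightarrow> atm P le y \<longrightarrow> le x a \<longrightarrow> le y a \<longrightarrow> x \<noteq> y \<longrightarrow> shr P le x y)"
definition "mstr P le a \<longleftrightarrow> str P le a \<and> (\<forall>b\<in>P. str P le b \<longrightarrow> le a b \<longrightarrow> b = a)"
definition "lab P le m \<longleftrightarrow> mstr P le m \<or> (atm P le m \<and> \<not>(\<exists>b1\<in>P. \<exists>b2\<in>P. mstr P le b1 \<and> mstr P le b2 \<and> b1 \<noteq> b2 \<and> le m b1 \<and> le m b2))"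
definition "dbl P le m \<longleftrightarrow> atm P le m \<and> (\<forall>b\<in>P. le m b \<longrightarrow> b = m)"

locale piso =
  fixes P Q and le :: "'a \<Rightarrow> 'a \<Rightarrow> bool" and le' :: "'b \<Rightarrow> 'b \<Rightarrow> bool" and \<phi> :: "'a \<Rightarrow> 'b"
  assumes bij: "bij_betw \<phi> P Q" and ord: "\<forall>x\<in>P. \<forall>y\<in>P. le x y = le' (\<phi> x) (\<phi> y)"
begin
lemma Qim: "Q = \<phi> ` P" using bij by (simp add: bij_betw_def)
lemma inj: "x\<in>P \<Longrightarrow> y\<in>P \<Longrightarrow> (\<phi> x = \<phi> y) = (x = y)" using bij by (auto simp: bij_betw_def inj_on_def)
lemma T_atm: "x\<in>P \<Longrightarrow> atm P le x = atm Q le' (\<phi> x)"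
  unfolding atm_def Qim using ord inj by auto
lemma T_shr: "x\<in>P \<Longrightarrow> y\<in>P \<Longrightarrow> shr P le x y = shr Q le' (\<phi> x) (\<phi> y)"
  unfolding shr_def Qim using ord inj T_atm[unfolded Qim] by (auto 0 3) 
lemma T_str: "x\<in>P \<Longrightarrow> str P le x = str Q le' (\<phi> x)"
  unfolding str_def Qim using ord inj T_atm[unfolded Qim] T_shr[unfolded Qim] by auto
lemma T_mstr: "x\<in>P \<Longrightarrow> mstr P le x = mstr Q le' (\<phi> x)"
  unfolding mstr_def Qim using ord inj T_str[unfolded Qim] by auto
lemma T_lab: "x\<in>P \<Longrightarrow> lab P le x = lab Q le' (\<phi> x)"
  unfolding lab_def Qim using ord inj T_atm[unfolded Qim] T_mstr[unfolded Qim] by auto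
lemma T_dbl: "x\<in>P \<Longrightarrow> dbl P le x = dbl Q le' (\<phi> x)"
  unfolding dbl_def Qim using ord inj T_atm[unfolded Qim] by auto
end

lemma shr_E:
  assumes "shr P le x y"
  obtains b where "b\<in>P" "le x b" "le y b" "\<And>z. z\<in>P \<Longrightarrow> atm P le z \<Longrightarrow> le z b \<Longrightarrow> z = x \<or> z = y"
  using assms unfolding shr_def by blast

lemma dbl_mstr: "dbl P le m \<Longrightarrow> mstr P le m"
  unfolding dbl_def mstr_def str_def atm_def by auto

lemma fiber_bij:
  assumes bij: "bij_betw \<phi> P Q" and "L ` V \<subseteq> P" and "\<phi> ` (L ` V) = L2 ` W"
    and fin: "\<And>v. v\<in>V \<Longrightarrow> finite {u\<in>V. L u = L v} \<and> finite {u\<in>W. L2 u = \<phi> (L v)}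
         \<and> card {u\<in>V. L u = L v} = card {u\<in>W. L2 u = \<phi> (L v)}"
  shows "\<exists>f. bij_betw f V W \<and> (\<forall>v\<in>V. L2 (f v) = \<phi> (L v))"
proof -
  define A where "A m = {u\<in>V. L u = m}" for m
  define B where "B m = {u\<in>W. L2 u = \<phi> m}" for m
  have "\<forall>m\<in>L`V. \<exists>g. bij_betw g (A m) (B m)"
    using fin by (auto simp: A_def B_def bij_betw_iff_card)
  then obtain g where g: "\<And>m. m\<in>L`V \<Longrightarrow> bij_betw (g m) (A m) (B m)" by metis
  define f where "f v = g (L v) v" for v
  have fv: "f v \<in> B (L v)" if "v\<in>V" for v
    using g[of "L v"] that unfolding f_def bij_betw_def A_def by auto
  have inj: "inj_on f V"
  proof (rule inj_onI)
    fix x y assume xy: "x\<in>V" "y\<in>V" "f x = f y"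
    then have "\<phi> (L x) = \<phi> (L y)" using fv[of x] fv[of y] by (auto simp: B_def)
    then have e: "L x = L y" using bij assms(2) xy by (auto simp: bij_betw_def inj_on_def)
    have "inj_on (g (L x)) (A (L x))" using g[of "L x"] xy by (auto simp: bij_betw_def)
    moreover have "x \<in> A (L x)" "y \<in> A (L x)" using xy e by (auto simp: A_def)
    ultimately show "x = y" using xy e by (auto simp: f_def inj_on_def)
  qed
  have "f ` V = W"
  proof
    show "f ` V \<subseteq> W" using fv by (auto simp: B_def)
    show "W \<subseteq> f ` V"
    proof
      fix w assume w: "w\<in>W"
      then have "L2 w \<in> \<phi> ` (L ` V)" using assms(3) by auto
      then obtain v where v: "v\<in>V" "L2 w = \<phi> (L v)" by auto
      then have "w \<in> B (L v)" using w by (auto simp: B_def)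
      then obtain u where u: "u \<in> A (L v)" "g (L v) u = w"
        using g[of "L v"] v by (metis bij_betw_def image_iff imageI)
      then have "f u = w" "u\<in>V" by (auto simp: f_def A_def)
      then show "w \<in> f ` V" by auto
    qed
  qed
  then show ?thesis using inj fv by (auto simp: bij_betw_def B_def intro!: exI[of _ f])
qed



definition "Nb E v = {w. (v,w) \<in> E}"
definition "Lb E v = {{v}, Nb E v}"

locale bip =
  fixes V :: "'a set" and E and cf :: "'a \<Rightarrow> nat"
  assumes EV: "E \<subseteq> V \<times> V" and symE: "sym E"
    and col: "\<And>a b. (a,b)\<in>E \<Longrightarrow> (cf a, cf b) \<in> K2_edges"
    and noiso: "\<And>v. v\<in>V \<Longrightarrow> \<exists>w. (v,w)\<in>E"
begin

abbreviation "P \<equiv> B0 V E"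
abbreviation "N \<equiv> Nb E"
abbreviation "L \<equiv> Lb E"

lemma esym: "(a,b)\<in>E \<Longrightarrow> (b,a)\<in>E" using symE by (auto simp: sym_def)
lemma noloop: "(a,a)\<notin>E" using col[of a a] by (auto simp: K2_edges_def)
lemma notri: "(a,x)\<in>E \<Longrightarrow> (b,x)\<in>E \<Longrightarrow> (a,b)\<notin>E"
  using col[of a x] col[of b x] col[of a b] by (auto simp: K2_edges_def)

lemma B0_iff: "\<alpha> \<in> P \<longleftrightarrow> (\<exists>\<sigma> \<tau>. \<alpha> = {\<sigma>,\<tau>} \<and> \<sigma> \<noteq> {} \<and> \<tau> \<noteq> {} \<and> \<sigma>\<times>\<tau> \<subseteq> E)"
  unfolding B0_def using EV by blast

lemma le_atom: "B0_le {{x},{y}} \<beta> \<longleftrightarrow> x \<in> \<Union>\<beta> \<and> y \<in> \<Union>\<beta>"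
  unfolding B0_le_def by auto

lemma split_edge:
  assumes "\<beta>\<in>P" "(a,b)\<in>E" "a\<in>\<Union>\<beta>" "b\<in>\<Union>\<beta>"
  shows "\<exists>\<sigma> \<tau>. \<beta> = {\<sigma>,\<tau>} \<and> a\<in>\<sigma> \<and> b\<in>\<tau> \<and> \<sigma> \<noteq> {} \<and> \<tau> \<noteq> {} \<and> \<sigma>\<times>\<tau> \<subseteq> E"
proof -
  obtain \<sigma> \<tau> where st: "\<beta> = {\<sigma>,\<tau>}" "\<sigma> \<noteq> {}" "\<tau> \<noteq> {}" "\<sigma>\<times>\<tau> \<subseteq> E"
    using assms(1) B0_iff by auto
  obtain s t where "s\<in>\<sigma>" "t\<in>\<tau>" using st by auto
  have "\<not> (a\<in>\<sigma> \<and> b\<in>\<sigma>)" using notri[of a t b] esym assms(2) st \<open>t\<in>\<tau>\<close> by blast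
  moreover have "\<not> (a\<in>\<tau> \<and> b\<in>\<tau>)" using notri[of a s b] esym assms(2) st \<open>s\<in>\<sigma>\<close> by blast
  ultimately have "(a\<in>\<sigma> \<and> b\<in>\<tau>) \<or> (a\<in>\<tau> \<and> b\<in>\<sigma>)" using assms(3,4) st by auto
  then show ?thesis
  proof
    assume "a\<in>\<sigma> \<and> b\<in>\<tau>" then show ?thesis using st by blast
  next
    assume "a\<in>\<tau> \<and> b\<in>\<sigma>" then show ?thesis using st esym
      by (intro exI[of _ \<tau>] exI[of _ \<sigma>]) (auto simp: insert_commute)
  qed
qed

lemma edge_in: "(a,b)\<in>E \<Longrightarrow> {{a},{b}} \<in> P"
  unfolding B0_iff by auto

lemma atm_iff: "atm P B0_le \<alpha> \<longleftrightarrow> (\<exists>a b. (a,b)\<in>E \<and> \<alpha> = {{a},{b}})"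
proof
  assume "atm P B0_le \<alpha>"
  then have a: "\<alpha>\<in>P" "\<And>y. y\<in>P \<Longrightarrow> B0_le y \<alpha> \<Longrightarrow> y = \<alpha>" unfolding atm_def by auto
  obtain \<sigma> \<tau> where st: "\<alpha> = {\<sigma>,\<tau>}" "\<sigma> \<noteq> {}" "\<tau> \<noteq> {}" "\<sigma>\<times>\<tau> \<subseteq> E"
    using a(1) B0_iff by auto
  obtain s t where "s\<in>\<sigma>" "t\<in>\<tau>" using st by auto
  then have "(s,t)\<in>E" "B0_le {{s},{t}} \<alpha>" using st by (auto simp: le_atom)
  then show "\<exists>a b. (a,b)\<in>E \<and> \<alpha> = {{a},{b}}" using a(2) edge_in by metis
next
  assume "\<exists>a b. (a,b)\<in>E \<and> \<alpha> = {{a},{b}}"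
  then obtain a b where ab: "(a,b)\<in>E" "\<alpha> = {{a},{b}}" by auto
  have "y = \<alpha>" if yP: "y\<in>P" "B0_le y \<alpha>" for y
  proof -
    obtain \<sigma> \<tau> where st: "y = {\<sigma>,\<tau>}" "\<sigma> \<noteq> {}" "\<tau> \<noteq> {}" "\<sigma>\<times>\<tau> \<subseteq> E"
      using yP(1) B0_iff by auto
    have "\<sigma> = {a} \<or> \<sigma> = {b}" "\<tau> = {a} \<or> \<tau> = {b}" using yP(2) st ab
      unfolding B0_le_def by auto
    moreover have "\<sigma> \<noteq> \<tau>" using st noloop by auto
    ultimately show ?thesis using st ab by auto
  qed
  then show "atm P B0_le \<alpha>" using ab edge_in unfolding atm_def by auto
qed

lemma sides:
  assumes "\<sigma>\<times>\<tau> \<subseteq> E" "\<sigma> \<noteq> {}" "\<tau> \<noteq> {}" "(a,b)\<in>E" "a\<in>\<sigma>\<union>\<tau>" "b\<in>\<sigma>\<union>\<tau>"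
  shows "(a\<in>\<sigma> \<and> b\<in>\<tau>) \<or> (a\<in>\<tau> \<and> b\<in>\<sigma>)"
proof -
  obtain s t where "s\<in>\<sigma>" "t\<in>\<tau>" using assms by auto
  have "\<not> (a\<in>\<sigma> \<and> b\<in>\<sigma>)" using notri[of a t b] esym assms \<open>t\<in>\<tau>\<close> by blast
  moreover have "\<not> (a\<in>\<tau> \<and> b\<in>\<tau>)" using notri[of a s b] esym assms \<open>s\<in>\<sigma>\<close> by blast
  ultimately show ?thesis using assms by auto
qed

lemma disj: "\<sigma>\<times>\<tau> \<subseteq> E \<Longrightarrow> x\<in>\<sigma> \<Longrightarrow> x \<in> \<tau> \<Longrightarrow> False"
  using noloop by auto

lemma shr_intro:
  assumes "(u,p)\<in>E" "(u,q)\<in>E" "p\<noteq>q"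
  shows "shr P B0_le {{u},{p}} {{u},{q}}"
proof -
  have np: "(p,q)\<notin>E" using notri[of p u q] esym assms by blast
  have b: "{{u},{p,q}} \<in> P" using assms B0_iff by blast
  have "z = {{u},{p}} \<or> z = {{u},{q}}" if zh: "atm P B0_le z" "B0_le z {{u},{p,q}}" for z
  proof -
    obtain s t where st: "(s,t)\<in>E" "z = {{s},{t}}" using zh atm_iff by auto
    have "s\<in>{u,p,q}" "t\<in>{u,p,q}" using zh(2) st by (auto simp: le_atom)
    then show ?thesis using st np noloop esym by (auto simp: insert_commute)
  qed
  moreover have "{{u},{p}} \<noteq> {{u},{q}}" using assms noloop by (auto simp: doubleton_eq_iff)
  ultimately show ?thesis unfolding shr_def using atm_iff assms b
    by (intro conjI bexI[of _ "{{u},{p,q}}"]) (auto simp: le_atom)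
qed

lemma shr_dest:
  assumes "(a,b)\<in>E" "(c,d)\<in>E" "shr P B0_le {{a},{b}} {{c},{d}}"
  shows "a=c \<or> a=d \<or> b=c \<or> b=d"
proof (rule ccontr)
  assume nd: "\<not> ?thesis"
  obtain \<beta> where \<beta>: "\<beta>\<in>P" "B0_le {{a},{b}} \<beta>" "B0_le {{c},{d}} \<beta>"
    "\<And>z. z\<in>P \<Longrightarrow> atm P B0_le z \<Longrightarrow> B0_le z \<beta> \<Longrightarrow> z = {{a},{b}} \<or> z = {{c},{d}}"
    by (rule shr_E[OF assms(3)]) (rule that)
  obtain \<sigma> \<tau> where st: "\<beta> = {\<sigma>,\<tau>}" "a\<in>\<sigma>" "b\<in>\<tau>" "\<sigma> \<noteq> {}" "\<tau> \<noteq> {}" "\<sigma>\<times>\<tau> \<subseteq> E"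
    using split_edge[OF \<beta>(1) assms(1)] \<beta>(2) unfolding le_atom by blast
  have "c\<in>\<sigma>\<union>\<tau>" "d\<in>\<sigma>\<union>\<tau>" using \<beta>(3) st unfolding le_atom by auto
  then have "(c\<in>\<sigma> \<and> d\<in>\<tau>) \<or> (c\<in>\<tau> \<and> d\<in>\<sigma>)" using sides[OF st(6,4,5) assms(2)] by auto
  then show False
  proof
    assume h: "c\<in>\<sigma> \<and> d\<in>\<tau>"
    then have e: "(a,d)\<in>E" using st by auto
    have at: "atm P B0_le {{a},{d}}" using atm_iff e by blast
    have le: "B0_le {{a},{d}} \<beta>" using st h by (auto simp: le_atom)
    have "{{a},{d}} = {{a},{b}} \<or> {{a},{d}} = {{c},{d}}"
      using \<beta>(4)[OF edge_in[OF e] at le] .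
    then show False using nd noloop e by (auto simp: doubleton_eq_iff)
  next
    assume h: "c\<in>\<tau> \<and> d\<in>\<sigma>"
    then have e: "(a,c)\<in>E" using st by auto
    have at: "atm P B0_le {{a},{c}}" using atm_iff e by blast
    have le: "B0_le {{a},{c}} \<beta>" using st h by (auto simp: le_atom)
    have "{{a},{c}} = {{a},{b}} \<or> {{a},{c}} = {{c},{d}}"
      using \<beta>(4)[OF edge_in[OF e] at le] .
    then show False using nd noloop e by (auto simp: doubleton_eq_iff)
  qed
qed

lemma str_iff: "str P B0_le \<alpha> \<longleftrightarrow> (\<exists>u S. \<alpha> = {{u},S} \<and> S \<noteq> {} \<and> S \<subseteq> N u)"
proof
  assume h: "str P B0_le \<alpha>"
  then have aP: "\<alpha>\<in>P" unfolding str_def by auto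
  obtain \<sigma> \<tau> where st: "\<alpha> = {\<sigma>,\<tau>}" "\<sigma> \<noteq> {}" "\<tau> \<noteq> {}" "\<sigma>\<times>\<tau> \<subseteq> E"
    using aP B0_iff by auto
  have sh: "\<And>x y. x\<in>P \<Longrightarrow> y\<in>P \<Longrightarrow> atm P B0_le x \<Longrightarrow> atm P B0_le y \<Longrightarrow> B0_le x \<alpha> \<Longrightarrow> B0_le y \<alpha> \<Longrightarrow> x \<noteq> y \<Longrightarrow> shr P B0_le x y"
    using h unfolding str_def by blast
  have "\<not> ((\<exists>s1\<in>\<sigma>. \<exists>s2\<in>\<sigma>. s1\<noteq>s2) \<and> (\<exists>t1\<in>\<tau>. \<exists>t2\<in>\<tau>. t1\<noteq>t2))"
  proof
    assume "(\<exists>s1\<in>\<sigma>. \<exists>s2\<in>\<sigma>. s1\<noteq>s2) \<and> (\<exists>t1\<in>\<tau>. \<exists>t2\<in>\<tau>. t1\<noteq>t2)"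
    then obtain s1 s2 t1 t2 where q: "s1\<in>\<sigma>" "s2\<in>\<sigma>" "s1\<noteq>s2" "t1\<in>\<tau>" "t2\<in>\<tau>" "t1\<noteq>t2" by blast
    have e: "(s1,t1)\<in>E" "(s2,t2)\<in>E" using q st by auto
    have ne: "{{s1},{t1}} \<noteq> {{s2},{t2}}" using q disj[OF st(4)] by (auto simp: doubleton_eq_iff)
    have "shr P B0_le {{s1},{t1}} {{s2},{t2}}"
    proof (rule sh)
      show "{{s1},{t1}} \<in> P" "{{s2},{t2}} \<in> P" using e edge_in by auto
      show "atm P B0_le {{s1},{t1}}" "atm P B0_le {{s2},{t2}}" using e atm_iff by blast+
      show "B0_le {{s1},{t1}} \<alpha>" "B0_le {{s2},{t2}} \<alpha>" using q st by (auto simp: le_atom)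
    qed (rule ne)
    then have "s1=s2 \<or> s1=t2 \<or> t1=s2 \<or> t1=t2" using shr_dest e by blast
    then show False using q disj[OF st(4)] by blast
  qed
  then have "(\<exists>u. \<sigma> = {u}) \<or> (\<exists>u. \<tau> = {u})" using st by blast
  then show "\<exists>u S. \<alpha> = {{u},S} \<and> S \<noteq> {} \<and> S \<subseteq> N u"
  proof
    assume "\<exists>u. \<sigma> = {u}" then obtain u where "\<sigma> = {u}" by blast
    then show ?thesis using st by (intro exI[of _ u] exI[of _ \<tau>]) (auto simp: Nb_def)
  next
    assume "\<exists>u. \<tau> = {u}" then obtain u where "\<tau> = {u}" by blast
    then show ?thesis using st esym by (intro exI[of _ u] exI[of _ \<sigma>]) (auto simp: Nb_def insert_commute)
  qed
next
  assume "\<exists>u S. \<alpha> = {{u},S} \<and> S \<noteq> {} \<and> S \<subseteq> N u"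
  then obtain u S where uS: "\<alpha> = {{u},S}" "S \<noteq> {}" "S \<subseteq> N u" by blast
  have "{u}\<times>S \<subseteq> E" using uS by (auto simp: Nb_def)
  then have aP: "\<alpha>\<in>P" using uS unfolding B0_iff by blast
  have at: "\<exists>p. (u,p)\<in>E \<and> x = {{u},{p}}" if xh: "atm P B0_le x" "B0_le x \<alpha>" for x
  proof -
    obtain a b where ab: "(a,b)\<in>E" "x = {{a},{b}}" using xh atm_iff by auto
    have "a\<in>{u}\<union>S" "b\<in>{u}\<union>S" using xh(2) ab uS by (auto simp: le_atom)
    moreover have "\<not>(a\<in>S \<and> b\<in>S)" using notri[of a u b] esym ab uS by (auto simp: Nb_def)
    ultimately show ?thesis using ab noloop esym uS by (auto simp: Nb_def insert_commute)
  qed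
  show "str P B0_le \<alpha>" unfolding str_def
  proof (intro conjI aP ballI impI)
    fix x y assume "x\<in>P" "y\<in>P" "atm P B0_le x" "atm P B0_le y" "B0_le x \<alpha>" "B0_le y \<alpha>" "x\<noteq>y"
    then show "shr P B0_le x y" using at[of x] at[of y] shr_intro by blast
  qed
qed

end

context bip begin

lemma atmI: "(a,b)\<in>E \<Longrightarrow> atm P B0_le {{a},{b}}" using atm_iff by blast
lemma atmD: "atm P B0_le \<alpha> \<Longrightarrow> \<exists>a b. (a,b)\<in>E \<and> \<alpha> = {{a},{b}}" using atm_iff by blast
lemma strD: "str P B0_le \<alpha> \<Longrightarrow> \<exists>u S. \<alpha> = {{u},S} \<and> S \<noteq> {} \<and> S \<subseteq> N u" using str_iff by blast

lemma Nne: "v\<in>V \<Longrightarrow> N v \<noteq> {}" using noiso by (auto simp: Nb_def)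
lemma Ein: "(a,b)\<in>E \<Longrightarrow> a\<in>V \<and> b\<in>V" using EV by auto
lemma NnotV: "v \<notin> N v" using noloop by (auto simp: Nb_def)

lemma Lv_P: "v\<in>V \<Longrightarrow> L v \<in> P"
proof -
  assume v: "v\<in>V"
  have "{v}\<times>N v \<subseteq> E" by (auto simp: Nb_def)
  then show ?thesis using Nne[OF v] unfolding B0_iff Lb_def
    by (intro exI[of _ "{v}"] exI[of _ "N v"]) simp
qed

lemma Lv_str: "v\<in>V \<Longrightarrow> str P B0_le (L v)"
  unfolding str_iff Lb_def using Nne by (intro exI[of _ v] exI[of _ "N v"]) simp

lemma le_Lv: "S \<subseteq> N u \<Longrightarrow> B0_le {{u},S} (L u)"
  unfolding B0_le_def Lb_def by auto

lemma M1: assumes "mstr P B0_le \<alpha>" shows "\<exists>v\<in>V. \<alpha> = L v"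
proof -
  have s: "str P B0_le \<alpha>" and mx: "\<And>b. b\<in>P \<Longrightarrow> str P B0_le b \<Longrightarrow> B0_le \<alpha> b \<Longrightarrow> b = \<alpha>"
    using assms unfolding mstr_def by auto
  obtain u S where uS: "\<alpha> = {{u},S}" "S \<noteq> {}" "S \<subseteq> N u" using strD[OF s] by blast
  then obtain x where "(u,x)\<in>E" by (auto simp: Nb_def)
  then have u: "u\<in>V" using Ein by blast
  have "B0_le \<alpha> (L u)" using le_Lv[OF uS(3)] uS(1) by simp
  then have "L u = \<alpha>" by (rule mx[OF Lv_P[OF u] Lv_str[OF u]])
  then show ?thesis using u by auto
qed

lemma L_eq: "L u = L v \<Longrightarrow> u \<noteq> v \<Longrightarrow> N v = {u} \<and> N u = {v}"
  unfolding Lb_def by (metis doubleton_eq_iff singleton_inject)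

lemma M2: assumes v: "v\<in>V" and ns: "\<forall>w. N v \<noteq> {w}" shows "mstr P B0_le (L v)"
  unfolding mstr_def
proof (intro conjI ballI impI Lv_str v)
  fix b assume b: "b\<in>P" "str P B0_le b" "B0_le (L v) b"
  obtain u S where uS: "b = {{u},S}" "S \<noteq> {}" "S \<subseteq> N u" using strD[OF b(2)] by blast
  obtain w0 where w0: "w0 \<in> N v" using Nne[OF v] by auto
  have bb: "\<forall>\<sigma>\<in>{{v},N v}. \<exists>\<tau>\<in>{{u},S}. \<sigma> \<subseteq> \<tau>" using b(3) uS(1) unfolding B0_le_def Lb_def by simp
  have le1: "{v} \<subseteq> {u} \<or> {v} \<subseteq> S" using bb by simp
  have le2: "N v \<subseteq> {u} \<or> N v \<subseteq> S" using bb by simp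
  have nsu: "\<not> N v \<subseteq> {u}"
  proof
    assume "N v \<subseteq> {u}"
    then have "N v = {} \<or> N v = {u}" by (rule subset_singletonD)
    then show False using ns Nne[OF v] by blast
  qed
  then have NS: "N v \<subseteq> S" using le2 by blast
  show "b = L v"
  proof (cases "u = v")
    case True
    then have "S = N v" using uS(3) NS by (rule_tac equalityI) simp_all
    then show ?thesis using uS(1) True by (simp add: Lb_def)
  next
    case False
    then have vS: "v \<in> S" using le1 by blast
    then have uv: "(u,v)\<in>E" using uS(3) by (auto simp: Nb_def)
    have "(u,w0)\<in>E" using w0 NS uS(3) by (auto simp: Nb_def)
    moreover have "(v,w0)\<in>E" using w0 by (simp add: Nb_def)
    ultimately show ?thesis using notri[of u w0 v] uv by blast
  qed
qed

lemma dbl_L: assumes v: "v\<in>V" and w: "N v = {w}" "N w = {v}" shows "dbl P B0_le (L v)"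
proof -
  have e: "(v,w)\<in>E" using w by (auto simp: Nb_def)
  have Lv: "L v = {{v},{w}}" using w by (simp add: Lb_def)
  have "b = L v" if bh: "b\<in>P" "B0_le (L v) b" for b
  proof -
    have "B0_le {{v},{w}} b" using bh Lv by simp
    then have "v\<in>\<Union>b" "w\<in>\<Union>b" unfolding le_atom by auto
    then obtain \<sigma> \<tau> where st: "b = {\<sigma>,\<tau>}" "v\<in>\<sigma>" "w\<in>\<tau>" "\<sigma> \<noteq> {}" "\<tau> \<noteq> {}" "\<sigma>\<times>\<tau> \<subseteq> E"
      using split_edge[OF bh(1) e] by blast
    have "\<tau> \<subseteq> N v" using st by (auto simp: Nb_def)
    moreover have "\<sigma> \<subseteq> N w" using st esym by (auto simp: Nb_def)
    ultimately have "\<tau> = {w}" "\<sigma> = {v}" using st w by auto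
    then show ?thesis using st Lv by simp
  qed
  then show ?thesis unfolding dbl_def using atmI[OF e] Lv Lv_P[OF v] by auto
qed

lemma M4: assumes v: "v\<in>V" and w: "N v = {w}" "N w \<noteq> {v}" shows "\<not> mstr P B0_le (L v)"
proof
  assume m: "mstr P B0_le (L v)"
  have e: "(v,w)\<in>E" using w by (auto simp: Nb_def)
  then have wV: "w\<in>V" using Ein by blast
  have "B0_le (L v) (L w)" using w esym e unfolding B0_le_def Lb_def Nb_def by auto
  then have "L w = L v" using m Lv_P[OF wV] Lv_str[OF wV] unfolding mstr_def by blast
  then show False using L_eq[of w v] w noloop e by auto
qed

lemma dbl_iff: assumes v: "v\<in>V" shows "dbl P B0_le (L v) \<longleftrightarrow> (\<exists>w. N v = {w} \<and> N w = {v})"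
proof
  assume d: "dbl P B0_le (L v)"
  then have "atm P B0_le (L v)" unfolding dbl_def by blast
  then obtain a b where ab: "(a,b)\<in>E" "L v = {{a},{b}}" using atmD by blast
  then obtain w where w: "N v = {w}" unfolding Lb_def by (auto simp: doubleton_eq_iff)
  then have e: "(v,w)\<in>E" by (auto simp: Nb_def)
  then have wV: "w\<in>V" using Ein by blast
  have "B0_le (L v) (L w)" using w esym e unfolding B0_le_def Lb_def Nb_def by auto
  then have "L w = L v" using d Lv_P[OF wV] unfolding dbl_def by blast
  then show "\<exists>w. N v = {w} \<and> N w = {v}" using L_eq[of w v] w noloop e by auto
next
  assume "\<exists>w. N v = {w} \<and> N w = {v}"
  then show "dbl P B0_le (L v)" using dbl_L v by blast
qed

lemma lab_iff: "lab P B0_le \<alpha> \<longleftrightarrow> (\<exists>v\<in>V. \<alpha> = L v)"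
proof
  assume "lab P B0_le \<alpha>"
  then consider "mstr P B0_le \<alpha>" | "atm P B0_le \<alpha>" "\<not>(\<exists>b1\<in>P. \<exists>b2\<in>P. mstr P B0_le b1 \<and> mstr P B0_le b2 \<and> b1 \<noteq> b2 \<and> B0_le \<alpha> b1 \<and> B0_le \<alpha> b2)"
    unfolding lab_def by blast
  then show "\<exists>v\<in>V. \<alpha> = L v"
  proof cases
    case 1 then show ?thesis using M1 by blast
  next
    case 2
    obtain a b where ab: "(a,b)\<in>E" "\<alpha> = {{a},{b}}" using atmD[OF 2(1)] by blast
    have aV: "a\<in>V" and bV: "b\<in>V" using Ein ab by auto
    show ?thesis
    proof (cases "N a = {b}")
      case True then have "\<alpha> = L a" using ab by (simp add: Lb_def)
      then show ?thesis using aV by blast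
    next
      case na: False
      show ?thesis
      proof (cases "N b = {a}")
        case True then have "\<alpha> = L b" using ab by (simp add: Lb_def insert_commute)
        then show ?thesis using bV by blast
      next
        case nb: False
        have bN: "b \<in> N a" "a \<in> N b" using ab esym by (auto simp: Nb_def)
        have "\<forall>w. N a \<noteq> {w}" using na bN by auto
        moreover have "\<forall>w. N b \<noteq> {w}" using nb bN by auto
        ultimately have m: "mstr P B0_le (L a)" "mstr P B0_le (L b)" using M2 aV bV by auto
        have ne: "L a \<noteq> L b" using L_eq[of a b] na ab noloop by auto
        have "B0_le {{a},{b}} (L a)" "B0_le {{a},{b}} (L b)" unfolding le_atom Lb_def Nb_def using ab esym by auto
        then have "B0_le \<alpha> (L a)" "B0_le \<alpha> (L b)" using ab by auto
        then have "\<exists>b1\<in>P. \<exists>b2\<in>P. mstr P B0_le b1 \<and> mstr P B0_le b2 \<and> b1 \<noteq> b2 \<and> B0_le \<alpha> b1 \<and> B0_le \<alpha> b2"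
          using m ne Lv_P[OF aV] Lv_P[OF bV] by blast
        then show ?thesis using 2(2) by blast
      qed
    qed
  qed
next
  assume "\<exists>v\<in>V. \<alpha> = L v"
  then obtain v where v: "v\<in>V" "\<alpha> = L v" by blast
  show "lab P B0_le \<alpha>"
  proof (cases "\<exists>w. N v = {w}")
    case False
    then have "\<forall>w. N v \<noteq> {w}" by blast
    then have "mstr P B0_le \<alpha>" using M2[OF v(1)] v(2) by simp
    then show ?thesis unfolding lab_def by (rule disjI1)
  next
    case True
    then obtain w where w: "N v = {w}" by blast
    have e: "(v,w)\<in>E" using w by (auto simp: Nb_def)
    then have wV: "w\<in>V" using Ein by blast
    show ?thesis
    proof (cases "N w = {v}")
      case True
      then have "mstr P B0_le \<alpha>" using dbl_mstr[OF dbl_L[OF v(1) w True]] v(2) by simp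
      then show ?thesis unfolding lab_def by (rule disjI1)
    next
      case nw: False
      have Lv: "L v = {{v},{w}}" using w by (simp add: Lb_def)
      have at: "atm P B0_le \<alpha>" using atmI[OF e] Lv v by simp
      have "b = L w" if bh: "b\<in>P" "mstr P B0_le b" "B0_le \<alpha> b" for b
      proof -
        obtain u where u: "u\<in>V" "b = L u" using M1 bh(2) by blast
        have "B0_le {{v},{w}} (L u)" using bh(3) v(2) Lv u by simp
        then have "v \<in> \<Union>(L u)" "w \<in> \<Union>(L u)" unfolding le_atom by auto
        then have "v \<in> {u} \<union> N u" "w \<in> {u} \<union> N u" by (auto simp: Lb_def)
        moreover have "u \<noteq> v" using M4[OF v(1) w nw] bh(2) u by blast
        ultimately have "(u,v)\<in>E" "u = w \<or> (u,w)\<in>E" by (auto simp: Nb_def)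
        then have "u = w" using notri[of u w v] e esym by blast
        then show ?thesis using u by simp
      qed
      then have "\<not>(\<exists>b1\<in>P. \<exists>b2\<in>P. mstr P B0_le b1 \<and> mstr P B0_le b2 \<and> b1 \<noteq> b2 \<and> B0_le \<alpha> b1 \<and> B0_le \<alpha> b2)"
        by blast
      then show ?thesis using at unfolding lab_def by (intro disjI2 conjI)
    qed
  qed
qed

lemma adj: assumes "v\<in>V" "w\<in>V"
  shows "(v,w)\<in>E \<longleftrightarrow> v \<noteq> w \<and> (\<exists>a\<in>P. atm P B0_le a \<and> B0_le a (L v) \<and> B0_le a (L w))"
proof
  assume e: "(v,w)\<in>E"
  have "B0_le {{v},{w}} (L v)" "B0_le {{v},{w}} (L w)" using e esym unfolding le_atom Lb_def Nb_def by auto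
  then show "v \<noteq> w \<and> (\<exists>a\<in>P. atm P B0_le a \<and> B0_le a (L v) \<and> B0_le a (L w))"
    using e noloop edge_in atmI by blast
next
  assume h: "v \<noteq> w \<and> (\<exists>a\<in>P. atm P B0_le a \<and> B0_le a (L v) \<and> B0_le a (L w))"
  then obtain a where a: "atm P B0_le a" "B0_le a (L v)" "B0_le a (L w)" by blast
  obtain x y where xy: "(x,y)\<in>E" "a = {{x},{y}}" using atmD[OF a(1)] by blast
  have "B0_le {{x},{y}} (L v)" "B0_le {{x},{y}} (L w)" using a xy by auto
  then have 1: "x\<in>{v}\<union>N v" "y\<in>{v}\<union>N v" "x\<in>{w}\<union>N w" "y\<in>{w}\<union>N w"
    unfolding le_atom Lb_def by auto
  have "\<not>(x\<in>N v \<and> y\<in>N v)" using notri[of x v y] xy esym by (auto simp: Nb_def)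
  moreover have "\<not>(x\<in>N w \<and> y\<in>N w)" using notri[of x w y] xy esym by (auto simp: Nb_def)
  ultimately have "(x = v \<or> y = v) \<and> (x = w \<or> y = w)" using 1 by auto
  then show "(v,w)\<in>E" using h xy esym by auto
qed

lemma fiber: assumes v: "v\<in>V"
  shows "finite {u\<in>V. L u = L v} \<and> card {u\<in>V. L u = L v} = (if dbl P B0_le (L v) then 2 else 1)"
proof (cases "\<exists>w. N v = {w} \<and> N w = {v}")
  case True
  then obtain w where w: "N v = {w}" "N w = {v}" by blast
  have e: "(v,w)\<in>E" using w by (auto simp: Nb_def)
  have "{u\<in>V. L u = L v} = {v,w}"
  proof
    show "{u\<in>V. L u = L v} \<subseteq> {v,w}"
    proof
      fix u assume "u \<in> {u\<in>V. L u = L v}"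
      then have "L u = L v" by simp
      then have "u = v \<or> N v = {u}" using L_eq[of u v] by blast
      then show "u \<in> {v,w}" using w by auto
    qed
    show "{v,w} \<subseteq> {u\<in>V. L u = L v}" using v Ein[OF e] w by (auto simp: Lb_def insert_commute)
  qed
  moreover have "v \<noteq> w" using e noloop by blast
  moreover have "dbl P B0_le (L v)" using True dbl_iff[OF v] by blast
  ultimately show ?thesis by simp
next
  case False
  have "{u\<in>V. L u = L v} = {v}"
  proof
    show "{u\<in>V. L u = L v} \<subseteq> {v}"
    proof
      fix u assume "u \<in> {u\<in>V. L u = L v}"
      then have "L u = L v" by simp
      then have "u = v" using L_eq[of u v] False by blast
      then show "u \<in> {v}" by simp
    qed
    show "{v} \<subseteq> {u\<in>V. L u = L v}" using v by simp
  qed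
  moreover have "\<not> dbl P B0_le (L v)" using False dbl_iff[OF v] by blast
  ultimately show ?thesis by simp
qed

end


lemma mk_bip:
  assumes "is_graph V E" "bipartite V E" "no_isolated V E"
  shows "\<exists>c. bip V E c"
proof -
  obtain c where c: "graph_hom V E {1, 2} K2_edges c" using assms(2) unfolding bipartite_def by blast
  have "bip V E c"
  proof
    show "E \<subseteq> V \<times> V" "sym E" using assms(1) unfolding is_graph_def by auto
    show "\<And>a b. (a,b)\<in>E \<Longrightarrow> (c a, c b) \<in> K2_edges" using c unfolding graph_hom_def by auto
    show "\<And>v. v\<in>V \<Longrightarrow> \<exists>w. (v,w)\<in>E" using assms(3) unfolding no_isolated_def by auto
  qed
  then show ?thesis by blast
qed

theorem proposition4p4:
  fixes V :: "'a set" and E :: "('a \<times> 'a) set"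
    and W :: "'b set" and F :: "('b \<times> 'b) set"
  assumes "is_graph V E" and "bipartite V E" and "no_isolated V E"
    and "is_graph W F" and "bipartite W F" and "no_isolated W F"
    and "poset_iso (B0 V E) B0_le (B0 W F) B0_le"
  shows "graph_iso V E W F"
proof -
  obtain c1 where c1: "bip V E c1" using mk_bip assms(1-3) by blast
  obtain c2 where c2: "bip W F c2" using mk_bip assms(4-6) by blast
  interpret X: bip V E c1 by (rule c1)
  interpret Y: bip W F c2 by (rule c2)
  obtain \<phi> where \<phi>: "bij_betw \<phi> (B0 V E) (B0 W F)"
    "\<forall>x\<in>B0 V E. \<forall>y\<in>B0 V E. B0_le x y = B0_le (\<phi> x) (\<phi> y)"
    using assms(7) unfolding poset_iso_def by blast
  interpret I: piso "B0 V E" "B0 W F" B0_le B0_le \<phi> using \<phi> by unfold_locales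
  have LP: "Lb E ` V \<subseteq> B0 V E" using X.Lv_P by blast
  have im: "\<phi> ` (Lb E ` V) = Lb F ` W"
  proof
    show "\<phi> ` (Lb E ` V) \<subseteq> Lb F ` W"
    proof
      fix y assume "y \<in> \<phi> ` (Lb E ` V)"
      then obtain v where v: "v\<in>V" "y = \<phi> (Lb E v)" by blast
      have "lab (B0 V E) B0_le (Lb E v)" using v(1) by (intro X.lab_iff[THEN iffD2] bexI[of _ v]) simp_all
      then have "lab (B0 W F) B0_le y" using I.T_lab X.Lv_P v by simp
      then have "\<exists>w\<in>W. y = Lb F w" by (rule Y.lab_iff[THEN iffD1])
      then show "y \<in> Lb F ` W" by blast
    qed
    show "Lb F ` W \<subseteq> \<phi> ` (Lb E ` V)"
    proof
      fix y assume "y \<in> Lb F ` W"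
      then obtain w where w: "w\<in>W" "y = Lb F w" by blast
      then have "y \<in> \<phi> ` B0 V E" using Y.Lv_P I.Qim by blast
      then obtain m where m: "m \<in> B0 V E" "y = \<phi> m" by blast
      have "lab (B0 W F) B0_le y" using w(1) by (intro Y.lab_iff[THEN iffD2] bexI[of _ w]) (simp_all add: w(2))
      then have "lab (B0 V E) B0_le m" using I.T_lab m by simp
      then have "\<exists>v\<in>V. m = Lb E v" by (rule X.lab_iff[THEN iffD1])
      then show "y \<in> \<phi> ` (Lb E ` V)" using m by blast
    qed
  qed
  have fin: "finite {u\<in>V. Lb E u = Lb E v} \<and> finite {u\<in>W. Lb F u = \<phi> (Lb E v)}
         \<and> card {u\<in>V. Lb E u = Lb E v} = card {u\<in>W. Lb F u = \<phi> (Lb E v)}" if v: "v\<in>V" for v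
  proof -
    obtain w where w: "w\<in>W" "\<phi> (Lb E v) = Lb F w" using im v by (metis image_eqI imageE)
    have d: "dbl (B0 V E) B0_le (Lb E v) = dbl (B0 W F) B0_le (Lb F w)"
      using I.T_dbl X.Lv_P v w by simp
    show ?thesis using X.fiber[OF v] Y.fiber[OF w(1)] d w(2) by simp
  qed
  obtain f where f: "bij_betw f V W" "\<forall>v\<in>V. Lb F (f v) = \<phi> (Lb E v)"
    using fiber_bij[OF \<phi>(1) LP im fin] by blast
  have "(v, w) \<in> E \<longleftrightarrow> (f v, f w) \<in> F" if vw: "v\<in>V" "w\<in>V" for v w
  proof -
    have fvw: "f v \<in> W" "f w \<in> W" using f(1) vw by (auto simp: bij_betw_def)
    have ne: "(v \<noteq> w) = (f v \<noteq> f w)" using f(1) vw by (auto simp: bij_betw_def inj_on_def)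
    have ex: "(\<exists>a\<in>B0 V E. atm (B0 V E) B0_le a \<and> B0_le a (Lb E v) \<and> B0_le a (Lb E w))
      = (\<exists>a\<in>B0 W F. atm (B0 W F) B0_le a \<and> B0_le a (Lb F (f v)) \<and> B0_le a (Lb F (f w)))"
    proof -
      have gen: "(\<exists>a\<in>B0 W F. R a) = (\<exists>a\<in>B0 V E. R (\<phi> a))" for R
        using I.Qim by auto
      show ?thesis unfolding gen using f(2) vw I.T_atm \<phi>(2) X.Lv_P by auto
    qed
    show ?thesis using X.adj[OF vw] Y.adj[OF fvw] ne ex by simp
  qed
  then show ?thesis unfolding graph_iso_def using f(1) by blast
qed


end
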